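(* Let $u\in V$ be quasiprimary of weight $N\ge1$, let $f_0(x),\dots,f_{2N-2}(x)$ be arbitrary Laurent series, and put $\psi^{(0)}_N(x,y)=\frac1{x-y}+\sum_{\ell=0}^{2N-2}f_\ell(x)y^\ell$. Then for all $v_1,\dots,v_n\in V$, \[ Z^{(0)}(u,x;v_1,y_1;\dots;v_n,y_n)=\sum_{k=1}^n\sum_{j\ge0}\partial^{(0,j)}\psi^{(0)}_N(x,y_k)\,Z^{(0)}(v_1,y_1;\dots;u(j)v_k,y_k;\dots;v_n,y_n). \]
   Context: $V=\bigoplus_{n\ge0}V_n$ is a simple, self-dual vertex operator algebra (VOA) of strong CFT type ($V_0=\mathbb C\mathbb 1$, $L(1)V_1=0$), with vertex operators $Y(u,z)=\sum_{n\in\mathbb Z}u(n)z^{-n-1}$, Virasoro modes $L(n)$, and $\mathrm{wt}(v)=n$ for $v\in V_n$. A vector $u$ is quasiprimary if $L(1)u=0$. $\langle\cdot,\cdot\rangle$ is the unique invariant nondegenerate bilinear form on $V$ (Li–Zamolodchikov metric) with $\langle\mathbb 1,\mathbb 1\rangle=1$, invariant meaning $\langle Y(u,z)v,w\rangle=\langle v,Y(e^{zL(1)}(-z^{-2})^{L(0)}u,1/z)w\rangle$. The genus zero $n$-point function is $Z^{(0)}(v_1,y_1;\dots;v_n,y_n)=\langle \mathbb 1,Y(v_1,y_1)\cdots Y(v_n,y_n)\mathbb 1\rangle$. Notation: $\partial^{(j)}_y=\frac1{j!}\partial_y^j$ and $\partial^{(i,j)}F(x,y)=\partial_x^{(i)}\partial_y^{(j)}F(x,y)$;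 negative powers of binomials such as $\frac1{x-y}$ are expanded using $(x+y)^m=\sum_{k\ge0}\binom mk x^{m-k}y^k$. *)

theory Defs
  imports Complex_Main
begin

text \<open>Sum of a family over its support; used for the sums over i \<ge> 0, j \<ge> 0, m \<ge> 0
  in the VOA axioms and in the theorem, all of which have finite support
  (truncation / grading).\<close>
definition fsum :: "('i \<Rightarrow> 'a::comm_monoid_add) \<Rightarrow> 'a" where
  "fsum g = sum g {i. g i \<noteq> 0}"

text \<open>Data: scalar multiplication sc on the carrier type 'v, modes md u n v = u(n)v,
  vacuum vac, conformal vector om, central charge cc.\<close>

definition Vir :: "('v \<Rightarrow> int \<Rightarrow> 'v \<Rightarrow> 'v) \<Rightarrow> 'v \<Rightarrow> int \<Rightarrow> 'v \<Rightarrow> 'v" where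
  "Vir md om n = md om (n + 1)"

definition wt_space ::
  "(complex \<Rightarrow> 'v \<Rightarrow> 'v) \<Rightarrow> ('v \<Rightarrow> int \<Rightarrow> 'v \<Rightarrow> 'v) \<Rightarrow> 'v \<Rightarrow> nat \<Rightarrow> 'v set" where
  "wt_space sc md om k = {v. Vir md om 0 v = sc (of_nat k) v}"

definition is_VOA ::
  "(complex \<Rightarrow> 'v::ab_group_add \<Rightarrow> 'v) \<Rightarrow> ('v \<Rightarrow> int \<Rightarrow> 'v \<Rightarrow> 'v) \<Rightarrow> 'v \<Rightarrow> 'v \<Rightarrow> complex \<Rightarrow> bool" where
  "is_VOA sc md vac om cc \<longleftrightarrow>
     vector_space sc \<and>
     (\<forall>u n. Vector_Spaces.linear sc sc (md u n)) \<and>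
     (\<forall>v n. Vector_Spaces.linear sc sc (\<lambda>u. md u n v)) \<and>
     \<comment> \<open>truncation\<close>
     (\<forall>u v. \<exists>M. \<forall>n\<ge>M. md u n v = 0) \<and>
     \<comment> \<open>vacuum axioms\<close>
     (\<forall>n v. md vac n v = (if n = -1 then v else 0)) \<and>
     (\<forall>u. md u (-1) vac = u \<and> (\<forall>n\<ge>0. md u n vac = 0)) \<and>
     \<comment> \<open>Borcherds (Jacobi) identity in modes\<close>
     (\<forall>u v w p q r.
        fsum (\<lambda>i::nat. sc (of_int p gchoose i) (md (md u (r + int i) v) (p + q - int i) w)) =
        fsum (\<lambda>i::nat. sc ((-1) ^ i * (of_int r gchoose i))
               (md u (p + r - int i) (md v (q + int i) w)
                - sc ((-1::complex) powi r) (md v (q + r - int i) (md u (p + int i) w))))) \<and>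
     \<comment> \<open>Virasoro relations\<close>
     (\<forall>m n v. Vir md om m (Vir md om n v) - Vir md om n (Vir md om m v) =
        sc (of_int (m - n)) (Vir md om (m + n) v)
        + (if m + n = 0 then sc (of_int (m ^ 3 - m) / 12 * cc) v else 0)) \<and>
     \<comment> \<open>L(-1)-derivative property: Y(L(-1)u,z) = d/dz Y(u,z)\<close>
     (\<forall>u n v. md (Vir md om (-1) u) n v = sc (- of_int n) (md u (n - 1) v)) \<and>
     \<comment> \<open>grading V = direct sum of L(0)-eigenspaces V_n, n \<ge> 0, each finite dimensional\<close>
     (\<forall>v. \<exists>S g. finite S \<and> (\<forall>k\<in>S. g k \<in> wt_space sc md om k) \<and> v = sum g S) \<and>
     (\<forall>k. \<exists>B. finite B \<and> wt_space sc md om k \<subseteq> module.span sc B) \<and>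
     om \<in> wt_space sc md om 2"

definition strong_CFT_type ::
  "(complex \<Rightarrow> 'v::ab_group_add \<Rightarrow> 'v) \<Rightarrow> ('v \<Rightarrow> int \<Rightarrow> 'v \<Rightarrow> 'v) \<Rightarrow> 'v \<Rightarrow> 'v \<Rightarrow> bool" where
  "strong_CFT_type sc md vac om \<longleftrightarrow>
     wt_space sc md om 0 = module.span sc {vac} \<and>
     (\<forall>v\<in>wt_space sc md om 1. Vir md om 1 v = 0)"

definition VOA_ideal ::
  "(complex \<Rightarrow> 'v::ab_group_add \<Rightarrow> 'v) \<Rightarrow> ('v \<Rightarrow> int \<Rightarrow> 'v \<Rightarrow> 'v) \<Rightarrow> 'v set \<Rightarrow> bool" where
  "VOA_ideal sc md I \<longleftrightarrow> module.subspace sc I \<and>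
     (\<forall>u w n. w \<in> I \<longrightarrow> md u n w \<in> I \<and> md w n u \<in> I)"

definition simple_VOA ::
  "(complex \<Rightarrow> 'v::ab_group_add \<Rightarrow> 'v) \<Rightarrow> ('v \<Rightarrow> int \<Rightarrow> 'v \<Rightarrow> 'v) \<Rightarrow> bool" where
  "simple_VOA sc md \<longleftrightarrow> (\<exists>v::'v. v \<noteq> 0) \<and>
     (\<forall>I. VOA_ideal sc md I \<longrightarrow> I = {0} \<or> I = UNIV)"

text \<open>Invariant bilinear form, invariance written out in modes for homogeneous u:
  <u(n)v,w> = (-1)^k sum_{m\<ge>0} 1/m! <v, (L(1)^m u)(2k-n-m-2) w>  for u \<in> V_k,
  which is the coefficient of z^(-n-1) in the defining invariance identity.\<close>
definition invariant_form ::
  "(complex \<Rightarrow> 'v::ab_group_add \<Rightarrow> 'v) \<Rightarrow> ('v \<Rightarrow> int \<Rightarrow> 'v \<Rightarrow> 'v) \<Rightarrow> 'v \<Rightarrow> ('v \<Rightarrow> 'v \<Rightarrow> complex) \<Rightarrow> bool" where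
  "invariant_form sc md om bf \<longleftrightarrow>
     (\<forall>v. Vector_Spaces.linear sc (*) (bf v)) \<and>
     (\<forall>w. Vector_Spaces.linear sc (*) (\<lambda>v. bf v w)) \<and>
     (\<forall>k u n v w. u \<in> wt_space sc md om k \<longrightarrow>
        bf (md u n v) w =
        (-1) ^ k * fsum (\<lambda>m::nat.
           bf v (md ((Vir md om 1 ^^ m) u) (2 * int k - n - int m - 2) w) / of_nat (fact m)))"

text \<open>The Li--Zamolodchikov metric: invariant, nondegenerate, normalised by <1,1> = 1.
  (Its existence is the self-duality hypothesis; it is then unique.)\<close>
definition LZ_metric ::
  "(complex \<Rightarrow> 'v::ab_group_add \<Rightarrow> 'v) \<Rightarrow> ('v \<Rightarrow> int \<Rightarrow> 'v \<Rightarrow> 'v) \<Rightarrow> 'v \<Rightarrow> 'v \<Rightarrow> ('v \<Rightarrow> 'v \<Rightarrow> complex) \<Rightarrow> bool" where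
  "LZ_metric sc md vac om bf \<longleftrightarrow>
     invariant_form sc md om bf \<and>
     (\<forall>v. (\<forall>w. bf v w = 0) \<longrightarrow> v = 0) \<and>
     (\<forall>w. (\<forall>v. bf v w = 0) \<longrightarrow> w = 0) \<and>
     bf vac vac = 1"

text \<open>A formal series in variables z_1..z_m is represented by its coefficient function
  on exponent lists: F es = coefficient of z_1^(es!0) ... z_m^(es!(m-1)).
  Genus zero n-point function <1, Y(v_1,y_1)...Y(v_n,y_n) 1>: the coefficient of
  y_1^(e_1)...y_n^(e_n) is <1, v_1(-e_1-1) ... v_n(-e_n-1) 1>.\<close>
definition Z0 ::
  "('v \<Rightarrow> int \<Rightarrow> 'v \<Rightarrow> 'v) \<Rightarrow> 'v \<Rightarrow> ('v \<Rightarrow> 'v \<Rightarrow> complex) \<Rightarrow> 'v list \<Rightarrow> int list \<Rightarrow> complex" where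
  "Z0 md vac bf vs es = bf vac (foldr (\<lambda>(v, e) w. md v (- e - 1) w) (zip vs es) vac)"

text \<open>Two-variable series G(x,y) as coefficient functions G p q (coefficient of x^p y^q).
  Expansion of 1/(x-y) = sum_{i\<ge>0} x^(-i-1) y^i.\<close>
definition inv_diff :: "int \<Rightarrow> int \<Rightarrow> complex" where
  "inv_diff p q = (if 0 \<le> q \<and> p = - q - 1 then 1 else 0)"

text \<open>psi_N^(0)(x,y) = 1/(x-y) + sum_{l=0}^{2N-2} f_l(x) y^l, with f l p the coefficient of
  x^p in f_l(x).\<close>
definition psi0 :: "(nat \<Rightarrow> int \<Rightarrow> complex) \<Rightarrow> nat \<Rightarrow> int \<Rightarrow> int \<Rightarrow> complex" where
  "psi0 f N p q = inv_diff p q + (if 0 \<le> q \<and> q \<le> 2 * int N - 2 then f (nat q) p else 0)"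

text \<open>Divided derivative in the second variable: d^(0,j), using
  d_y^(j) y^m = binom(m,j) y^(m-j).\<close>
definition dy :: "nat \<Rightarrow> (int \<Rightarrow> int \<Rightarrow> complex) \<Rightarrow> int \<Rightarrow> int \<Rightarrow> complex" where
  "dy j G p q = (of_int (q + int j) gchoose j) * G p (q + int j)"

text \<open>Product of G(x, y_k) (y := y_k, k zero-based) with a series H(y_1..y_n), giving a
  series in (x, y_1, ..., y_n); exponent list = x-exponent # y-exponents.\<close>
definition mult_at :: "nat \<Rightarrow> (int \<Rightarrow> int \<Rightarrow> complex) \<Rightarrow> (int list \<Rightarrow> complex) \<Rightarrow> int list \<Rightarrow> complex" where
  "mult_at k G H es = fsum (\<lambda>q::int. G (hd es) q * H ((tl es)[k := tl es ! k - q]))"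

end

theory Submission
  imports Defs
begin


lemma fsum_eq_sum: "finite S \<Longrightarrow> (\<And>x. x \<notin> S \<Longrightarrow> g x = 0) \<Longrightarrow> fsum g = sum g S"
  unfolding fsum_def by (rule sum.mono_neutral_left) auto

lemma fsum_zero[simp]: "fsum (\<lambda>x. 0) = 0" by (simp add: fsum_def)

lemma uniform_bound:
  fixes n :: nat
  shows "(\<forall>k<n. \<exists>M::nat. \<forall>j\<ge>M. P k j) \<Longrightarrow> \<exists>M. \<forall>k<n. \<forall>j\<ge>M. P k j"
proof (induction n)
  case 0 then show ?case by auto
next
  case (Suc n)
  then obtain M1 where M1: "\<forall>k<n. \<forall>j\<ge>M1. P k j" by auto
  from Suc.prems obtain M2 where M2: "\<forall>j\<ge>M2. P n j" by auto
  show ?case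
    by (rule exI[of _ "max M1 M2"]) (metis M1 M2 less_Suc_eq max.boundedE)
qed

lemma zero_gchoose: "0 < k \<Longrightarrow> (0::complex) gchoose k = 0"
  by (cases k) (simp_all add: gbinomial_0)

definition Wf :: "('v \<Rightarrow> int \<Rightarrow> 'v \<Rightarrow> 'v) \<Rightarrow> 'v \<Rightarrow> 'v list \<Rightarrow> int list \<Rightarrow> 'v" where
  "Wf md vac vs es = foldr (\<lambda>(v, e) w. md v (- e - 1) w) (zip vs es) vac"

lemma Wf_simps[simp]: "Wf md vac [] es = vac" "Wf md vac (v#vs) (e#es) = md v (-e-1) (Wf md vac vs es)"
  by (simp_all add: Wf_def)

lemma Z0_Wf: "Z0 md vac bf vs es = bf vac (Wf md vac vs es)"
  by (simp add: Z0_def Wf_def)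

locale vctx =
  fixes sc :: "complex \<Rightarrow> 'v::ab_group_add \<Rightarrow> 'v"
    and md :: "'v \<Rightarrow> int \<Rightarrow> 'v \<Rightarrow> 'v"
    and vac om :: 'v and cc :: complex
    and bf :: "'v \<Rightarrow> 'v \<Rightarrow> complex"
  assumes voa: "is_VOA sc md vac om cc"
    and lz: "LZ_metric sc md vac om bf"
begin

lemma mdr: "module_hom sc sc (md u n)"
  using voa by (auto simp: is_VOA_def linear_iff_module_hom)
lemma mdl: "module_hom sc sc (\<lambda>u. md u n v)"
  using voa by (auto simp: is_VOA_def linear_iff_module_hom)
lemma bfr: "module_hom sc (*) (bf v)"
  using lz by (auto simp: LZ_metric_def invariant_form_def linear_iff_module_hom)
lemma bfl: "module_hom sc (*) (\<lambda>v. bf v w)"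
  using lz by (auto simp: LZ_metric_def invariant_form_def linear_iff_module_hom)
lemma modsc: "module sc"
  using voa by (auto simp: is_VOA_def module_iff_vector_space)

lemma md_0r[simp]: "md u n 0 = 0" using module_hom.zero[OF mdr] .
lemma md_0l[simp]: "md 0 n v = 0" using module_hom.zero[OF mdl] by simp
lemma bf_0r[simp]: "bf v 0 = 0" using module_hom.zero[OF bfr] .
lemma bf_0l[simp]: "bf 0 w = 0" using module_hom.zero[OF bfl] by simp
lemma md_sum: "md u n (sum g S) = (\<Sum>a\<in>S. md u n (g a))" using module_hom.sum[OF mdr] .
lemma md_scale: "md u n (sc c x) = sc c (md u n x)" using module_hom.scale[OF mdr] .
lemma md_add: "md u n (x + y) = md u n x + md u n y" using module_hom.add[OF mdr] .
lemma bf_sum: "bf v (sum g S) = (\<Sum>a\<in>S. bf v (g a))" using module_hom.sum[OF bfr] .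
lemma bf_scale: "bf v (sc c x) = c * bf v x" using module_hom.scale[OF bfr] .
lemma bf_add: "bf v (x + y) = bf v x + bf v y" using module_hom.add[OF bfr] .
lemma sc0[simp]: "sc 0 x = 0" using module.scale_zero_left[OF modsc] .
lemma sc1[simp]: "sc 1 x = x" using module.scale_one[OF modsc] .
lemma scz[simp]: "sc c 0 = 0" using module.scale_zero_right[OF modsc] .
lemma sc_diff: "sc c (x - y) = sc c x - sc c y" using module.scale_right_diff_distrib[OF modsc] .

lemma vac_kill: "0 \<le> n \<Longrightarrow> md u n vac = 0"
  using voa by (auto simp: is_VOA_def)

lemma trunc: "\<exists>M::nat. \<forall>j\<ge>M. md u (int j) v = 0"
proof -
  have "\<forall>u v. \<exists>M. \<forall>n\<ge>M. md u n v = 0" using voa by (simp add: is_VOA_def)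
  then obtain M :: int where M: "\<forall>n\<ge>M. md u n v = 0" by blast
  show ?thesis
  proof (intro exI[of _ "nat M"] allI impI)
    fix j :: nat assume "nat M \<le> j" then have "M \<le> int j" by linarith
    then show "md u (int j) v = 0" using M by blast
  qed
qed

lemma borch:
  assumes M: "\<forall>i\<ge>M. md u (int i) v = 0"
  shows "md u p (md v q X) = md v q (md u p X)
     + (\<Sum>i<M. sc (of_int p gchoose i) (md (md u (int i) v) (p + q - int i) X))"
proof -
  have B: "fsum (\<lambda>i::nat. sc (of_int p gchoose i) (md (md u (0 + int i) v) (p + q - int i) X)) =
        fsum (\<lambda>i::nat. sc ((-1) ^ i * (of_int 0 gchoose i))
               (md u (p + 0 - int i) (md v (q + int i) X)
                - sc ((-1::complex) powi 0) (md v (q + 0 - int i) (md u (p + int i) X))))"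
    using voa unfolding is_VOA_def by blast
  have L: "fsum (\<lambda>i::nat. sc (of_int p gchoose i) (md (md u (0 + int i) v) (p + q - int i) X))
      = (\<Sum>i<M. sc (of_int p gchoose i) (md (md u (int i) v) (p + q - int i) X))"
    unfolding add_0 by (rule fsum_eq_sum) (use M in auto)
  have R: "fsum (\<lambda>i::nat. sc ((-1) ^ i * (of_int 0 gchoose i))
               (md u (p + 0 - int i) (md v (q + int i) X)
                - sc ((-1::complex) powi 0) (md v (q + 0 - int i) (md u (p + int i) X))))
      = md u p (md v q X) - md v q (md u p X)"
  proof -
    have "fsum (\<lambda>i::nat. sc ((-1) ^ i * (of_int 0 gchoose i))
               (md u (p + 0 - int i) (md v (q + int i) X)
                - sc ((-1::complex) powi 0) (md v (q + 0 - int i) (md u (p + int i) X))))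
       = (\<Sum>i\<in>{0}. sc ((-1) ^ i * (of_int 0 gchoose i))
               (md u (p + 0 - int i) (md v (q + int i) X)
                - sc ((-1::complex) powi 0) (md v (q + 0 - int i) (md u (p + int i) X))))"
      by (rule fsum_eq_sum) (auto simp: gbinomial_0 zero_gchoose)
    then show ?thesis by simp
  qed
  show ?thesis using B L R by (simp add: algebra_simps)
qed


lemma comm:
  "length es = length vs \<Longrightarrow> 0 \<le> l \<Longrightarrow> \<forall>k<length vs. \<forall>j\<ge>M. md u (int j) (vs!k) = 0 \<Longrightarrow>
   md u l (Wf md vac vs es) = (\<Sum>k<length vs. \<Sum>j<M. sc (of_int l gchoose j)
      (Wf md vac (vs[k := md u (int j) (vs!k)]) (es[k := es!k - (l - int j)])))"
proof (induction vs arbitrary: es)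
  case Nil
  then show ?case by (simp add: vac_kill)
next
  case (Cons v vs)
  then obtain e es' where es: "es = e # es'" and len: "length es' = length vs"
    by (cases es) auto
  have M0: "\<forall>i\<ge>M. md u (int i) v = 0" using Cons.prems(3) by auto
  have Ms: "\<forall>k<length vs. \<forall>j\<ge>M. md u (int j) (vs!k) = 0" using Cons.prems(3) by auto
  let ?X = "Wf md vac vs es'"
  have "md u l (Wf md vac (v#vs) (e#es')) = md u l (md v (-e-1) ?X)" by simp
  also have "\<dots> = md v (-e-1) (md u l ?X)
     + (\<Sum>i<M. sc (of_int l gchoose i) (md (md u (int i) v) (l + (-e-1) - int i) ?X))"
    by (rule borch[OF M0])
  also have "md u l ?X = (\<Sum>k<length vs. \<Sum>j<M. sc (of_int l gchoose j)
      (Wf md vac (vs[k := md u (int j) (vs!k)]) (es'[k := es'!k - (l - int j)])))"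
    using Cons.IH[OF len Cons.prems(2) Ms] .
  finally have A: "md u l (Wf md vac (v#vs) (e#es')) = (\<Sum>k<length vs. \<Sum>j<M. sc (of_int l gchoose j)
      (md v (-e-1) (Wf md vac (vs[k := md u (int j) (vs!k)]) (es'[k := es'!k - (l - int j)]))))
     + (\<Sum>i<M. sc (of_int l gchoose i) (md (md u (int i) v) (l + (-e-1) - int i) ?X))"
    by (simp add: md_sum md_scale)
  show ?case
    unfolding es A sum.lessThan_Suc_shift length_Cons
    by (simp add: algebra_simps)
qed

lemma Wf_zero: "k < length vs \<Longrightarrow> k < length es \<Longrightarrow> Wf md vac (vs[k:=0]) es = 0"
proof (induction vs arbitrary: es k)
  case Nil then show ?case by simp
next
  case (Cons v vs)
  then obtain e es' where es: "es = e # es'" by (cases es) auto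
  show ?case
  proof (cases k)
    case 0 then show ?thesis by (simp add: es)
  next
    case (Suc k') then show ?thesis using Cons by (simp add: es)
  qed
qed

lemma funpow_zero: fixes f :: "'a::zero \<Rightarrow> 'a" shows "f 0 = 0 \<Longrightarrow> (f ^^ k) 0 = 0"
  by (induction k) auto

lemma inv_inst: "invariant_form sc md om bf \<Longrightarrow> u \<in> wt_space sc md om k \<Longrightarrow>
  bf (md u n v) w =
        (-1) ^ k * fsum (\<lambda>m::nat.
           bf v (md ((Vir md om 1 ^^ m) u) (2 * int k - n - int m - 2) w) / of_nat (fact m))"
  unfolding invariant_form_def by (elim conjE) (drule spec, drule spec, drule spec, drule spec, drule spec, erule mp)

lemma vanish:
  assumes u: "u \<in> wt_space sc md om N" and q: "Vir md om 1 u = 0" and n: "n \<le> 2 * int N - 2"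
  shows "bf vac (md u n w) = 0"
proof -
  have I: "invariant_form sc md om bf" using lz by (simp add: LZ_metric_def)
  have inv: "bf (md u (2*int N - 2 - n) vac) w = (-1)^N * fsum (\<lambda>m::nat.
     bf vac (md ((Vir md om 1 ^^ m) u) (2*int N - (2*int N - 2 - n) - int m - 2) w) / of_nat (fact m))"
    using inv_inst[OF I u, of "2*int N - 2 - n" vac w] .
  have pw: "(Vir md om 1 ^^ m) u = 0" if m0: "m > 0" for m
  proof -
    from gr0_implies_Suc[OF m0] obtain m' where m: "m = Suc m'" ..
    have "(Vir md om 1 ^^ m) u = (Vir md om 1 ^^ m') (Vir md om 1 u)"
      unfolding m funpow_Suc_right by simp
    also have "\<dots> = 0" unfolding q by (rule funpow_zero) (simp add: Vir_def)
    finally show ?thesis .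
  qed
  have "fsum (\<lambda>m::nat.
     bf vac (md ((Vir md om 1 ^^ m) u) (2*int N - (2*int N - 2 - n) - int m - 2) w) / of_nat (fact m))
    = (\<Sum>m\<in>{0}. bf vac (md ((Vir md om 1 ^^ m) u) (2*int N - (2*int N - 2 - n) - int m - 2) w) / of_nat (fact m))"
    by (rule fsum_eq_sum) (auto simp: pw)
  also have "\<dots> = bf vac (md u n w)"
  proof -
    have "2*int N - (2*int N - 2 - n) - int 0 - 2 = n" by simp
    then show ?thesis by simp
  qed
  finally have F: "fsum (\<lambda>m::nat.
     bf vac (md ((Vir md om 1 ^^ m) u) (2*int N - (2*int N - 2 - n) - int m - 2) w) / of_nat (fact m))
     = bf vac (md u n w)" .
  have "md u (2*int N - 2 - n) vac = 0" using n by (intro vac_kill) simp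
  then have "(-1)^N * bf vac (md u n w) = 0" using inv F by (metis bf_0l)
  then show ?thesis by simp
qed

end



lemma b_eval:
  fixes N :: nat and D :: "nat \<Rightarrow> complex" and q :: int
  shows "(\<Sum>l\<le>2*N-2. if q = int l - int j then D l else 0) =
    (if 0 \<le> q + int j \<and> nat (q + int j) \<le> 2*N-2 then D (nat (q + int j)) else 0)"
proof (cases "0 \<le> q + int j")
  case True
  have "(\<Sum>l\<le>2*N-2. if q = int l - int j then D l else 0) =
        (\<Sum>l\<le>2*N-2. if l = nat (q + int j) then D (nat (q + int j)) else 0)"
    by (rule sum.cong) (use True in auto)
  also have "\<dots> = (if nat (q + int j) \<in> {..2*N-2} then D (nat (q + int j)) else 0)"
    by (rule sum.delta) simp
  finally show ?thesis using True by simp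
next
  case False
  then show ?thesis by (auto intro!: sum.neutral)
qed

lemma swap3: "(\<Sum>k\<in>A. \<Sum>j\<in>B. \<Sum>l\<in>C. g k j l) = (\<Sum>l\<in>C. \<Sum>k\<in>A. \<Sum>j\<in>B. g k j l)"
proof -
  have "(\<Sum>k\<in>A. \<Sum>j\<in>B. \<Sum>l\<in>C. g k j l) = (\<Sum>k\<in>A. \<Sum>l\<in>C. \<Sum>j\<in>B. g k j l)"
    by (rule sum.cong[OF refl], rule sum.swap)
  also have "\<dots> = (\<Sum>l\<in>C. \<Sum>k\<in>A. \<Sum>j\<in>B. g k j l)" by (rule sum.swap)
  finally show ?thesis .
qed

lemma mult_at_eval:
  assumes N: "N \<ge> 1"
  shows "mult_at k (dy j (psi0 f N)) H (p # es) =
    (if 0 \<le> -p-1 then (of_int (-p-1) gchoose j) * H (es[k := es!k - (-p-1 - int j)]) else 0)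
    + (\<Sum>l\<le>2*N-2. of_nat (l choose j) * f l p * H (es[k := es!k - (int l - int j)]))"
proof -
  define n where "n = -p-1"
  define A where "A = (if 0 \<le> n then (of_int n gchoose j) * H (es[k := es!k - (n - int j)]) else 0)"
  define D where "D l = of_nat (l choose j) * f l p * H (es[k := es!k - (int l - int j)])" for l
  define a where "a q = (if q = n - int j then A else 0)" for q
  define b where "b q = (\<Sum>l\<le>2*N-2. if q = int l - int j then D l else 0)" for q
  have pt: "dy j (psi0 f N) p q * H (es[k := es!k - q]) = a q + b q" for q
  proof -
    have bq: "b q = (if 0 \<le> q + int j \<and> nat (q + int j) \<le> 2*N-2 then D (nat (q + int j)) else 0)"
      unfolding b_def by (rule b_eval)
    have c1: "(0 \<le> q + int j \<and> q + int j \<le> 2 * int N - 2) = (0 \<le> q + int j \<and> nat (q + int j) \<le> 2*N-2)"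
      using N by auto
    have c2: "0 \<le> m \<Longrightarrow> (of_int m gchoose j :: complex) = of_nat (nat m choose j)" for m
      by (metis binomial_gbinomial int_nat_eq of_int_of_nat_eq)
    have hp: "p = -n-1" by (simp add: n_def)
    show ?thesis
    proof (cases "q = n - int j")
      case True
      have e: "q + int j = n" using True by simp
      show ?thesis
        unfolding dy_def psi0_def e bq a_def c1
        using N by (cases "0 \<le> n") (auto simp: inv_diff_def A_def D_def c2 True hp algebra_simps)
    next
      case False
      have c3: "0 \<le> q + int j \<Longrightarrow> (of_int q + of_nat j gchoose j :: complex) = of_nat (nat (q + int j) choose j)"
        using c2[of "q + int j"] by simp
      have i0: "inv_diff p (q + int j) = 0" using False by (auto simp: inv_diff_def hp)
      show ?thesis
        unfolding dy_def psi0_def bq a_def c1 i0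
        using False by (auto simp: D_def c2 c3 algebra_simps)
    qed
  qed
  define S where "S = insert (n - int j) ((\<lambda>l. int l - int j) ` {..2*N-2})"
  have fS: "finite S" by (simp add: S_def)
  have "mult_at k (dy j (psi0 f N)) H (p # es) = fsum (\<lambda>q. a q + b q)"
    unfolding mult_at_def using pt by simp
  also have "\<dots> = sum (\<lambda>q. a q + b q) S"
  proof (rule fsum_eq_sum[OF fS])
    fix q assume "q \<notin> S"
    then show "a q + b q = 0" unfolding a_def b_def S_def
      by (auto intro!: sum.neutral)
  qed
  also have "\<dots> = sum a S + sum b S" by (simp add: sum.distrib)
  also have "sum a S = A" unfolding a_def by (simp add: sum.delta' S_def)
  also have "sum b S = (\<Sum>l\<le>2*N-2. D l)"
  proof -
    have "sum b S = (\<Sum>l\<le>2*N-2. \<Sum>q\<in>S. if q = int l - int j then D l else 0)"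
      unfolding b_def by (rule sum.swap)
    also have "\<dots> = (\<Sum>l\<le>2*N-2. D l)"
      by (rule sum.cong) (auto simp: sum.delta' S_def)
    finally show ?thesis .
  qed
  finally show ?thesis unfolding A_def D_def n_def by simp
qed

theorem mainTheorem2:
  fixes sc :: "complex \<Rightarrow> 'v::ab_group_add \<Rightarrow> 'v"
    and md :: "'v \<Rightarrow> int \<Rightarrow> 'v \<Rightarrow> 'v"
    and vac om :: 'v and cc :: complex
    and bf :: "'v \<Rightarrow> 'v \<Rightarrow> complex"
    and u :: 'v and N :: nat
    and f :: "nat \<Rightarrow> int \<Rightarrow> complex"
    and vs :: "'v list"
  assumes "is_VOA sc md vac om cc"
    and "strong_CFT_type sc md vac om"
    and "simple_VOA sc md"
    and "LZ_metric sc md vac om bf"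
    and "N \<ge> 1"
    and "u \<in> wt_space sc md om N"
    and "Vir md om 1 u = 0"
    and "\<forall>l \<le> 2 * N - 2. \<exists>M. \<forall>p < M. f l p = 0"
  shows "\<forall>es. length es = Suc (length vs) \<longrightarrow>
           Z0 md vac bf (u # vs) es =
           (\<Sum>k < length vs. fsum (\<lambda>j::nat.
              mult_at k (dy j (psi0 f N)) (Z0 md vac bf (vs[k := md u (int j) (vs ! k)])) es))"
proof (intro allI impI)
  fix es :: "int list" assume len: "length es = Suc (length vs)"
  interpret vctx sc md vac om cc bf using assms(1,4) by unfold_locales
  obtain p es' where es: "es = p # es'" and len': "length es' = length vs"
    using len by (cases es) auto
  define n where "n = -p-1"
  define W where "W = Wf md vac vs es'"
  obtain M where M: "\<forall>k<length vs. \<forall>j\<ge>M. md u (int j) (vs!k) = 0"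
    using uniform_bound[of "length vs" "\<lambda>k j. md u (int j) (vs!k) = 0"] trunc by blast
  define B where "B l = (\<Sum>k<length vs. \<Sum>j<M. of_nat (l choose j) * f l p *
      bf vac (Wf md vac (vs[k := md u (int j) (vs!k)]) (es'[k := es'!k - (int l - int j)])))" for l
  have step1: "fsum (\<lambda>j::nat. mult_at k (dy j (psi0 f N)) (Z0 md vac bf (vs[k := md u (int j) (vs ! k)])) es)
    = (\<Sum>j<M. (if 0 \<le> n then (of_int n gchoose j) *
         bf vac (Wf md vac (vs[k := md u (int j) (vs!k)]) (es'[k := es'!k - (n - int j)])) else 0)
      + (\<Sum>l\<le>2*N-2. of_nat (l choose j) * f l p *
         bf vac (Wf md vac (vs[k := md u (int j) (vs!k)]) (es'[k := es'!k - (int l - int j)]))))"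
    (is "_ = ?R") if k: "k < length vs" for k
  proof -
    have "fsum (\<lambda>j::nat. mult_at k (dy j (psi0 f N)) (Z0 md vac bf (vs[k := md u (int j) (vs ! k)])) es)
      = (\<Sum>j<M. mult_at k (dy j (psi0 f N)) (Z0 md vac bf (vs[k := md u (int j) (vs ! k)])) es)"
    proof (rule fsum_eq_sum)
      fix j assume "j \<notin> {..<M}"
      then have "md u (int j) (vs!k) = 0" using M k by auto
      then show "mult_at k (dy j (psi0 f N)) (Z0 md vac bf (vs[k := md u (int j) (vs ! k)])) es = 0"
        unfolding mult_at_def es using Wf_zero k len' by (simp add: Z0_Wf)
    qed simp
    also have "\<dots> = ?R"
      by (rule sum.cong) (simp_all add: es mult_at_eval[OF assms(5)] Z0_Wf n_def)
    finally show ?thesis .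
  qed
  have Bz: "B l = 0" if l: "l \<le> 2*N-2" for l
  proof -
    have "md u (int l) W = (\<Sum>k<length vs. \<Sum>j<M. sc (of_int (int l) gchoose j)
      (Wf md vac (vs[k := md u (int j) (vs!k)]) (es'[k := es'!k - (int l - int j)])))"
      unfolding W_def by (rule comm[OF len' _ M]) simp
    then have "bf vac (md u (int l) W) = (\<Sum>k<length vs. \<Sum>j<M. of_nat (l choose j) *
      bf vac (Wf md vac (vs[k := md u (int j) (vs!k)]) (es'[k := es'!k - (int l - int j)])))"
      by (simp add: bf_sum bf_scale binomial_gbinomial)
    moreover have "bf vac (md u (int l) W) = 0"
      by (rule vanish[OF assms(6,7)]) (use l assms(5) in auto)
    ultimately have Z: "(\<Sum>k<length vs. \<Sum>j<M. of_nat (l choose j) *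
      bf vac (Wf md vac (vs[k := md u (int j) (vs!k)]) (es'[k := es'!k - (int l - int j)]))) = 0" by simp
    have "B l = f l p * (\<Sum>k<length vs. \<Sum>j<M. of_nat (l choose j) *
      bf vac (Wf md vac (vs[k := md u (int j) (vs!k)]) (es'[k := es'!k - (int l - int j)])))"
      unfolding B_def by (simp add: sum_distrib_left mult.assoc mult.left_commute)
    then show ?thesis using Z by simp
  qed
  have A: "(\<Sum>k<length vs. \<Sum>j<M. (if 0 \<le> n then (of_int n gchoose j) *
         bf vac (Wf md vac (vs[k := md u (int j) (vs!k)]) (es'[k := es'!k - (n - int j)])) else 0))
      = bf vac (md u n W)"
  proof (cases "0 \<le> n")
    case True
    have "md u n W = (\<Sum>k<length vs. \<Sum>j<M. sc (of_int n gchoose j)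
      (Wf md vac (vs[k := md u (int j) (vs!k)]) (es'[k := es'!k - (n - int j)])))"
      unfolding W_def by (rule comm[OF len' True M])
    then show ?thesis using True by (simp add: bf_sum bf_scale)
  next
    case False
    have "bf vac (md u n W) = 0"
      by (rule vanish[OF assms(6,7)]) (use False assms(5) in auto)
    then show ?thesis using False by simp
  qed
  have "(\<Sum>k < length vs. fsum (\<lambda>j::nat.
              mult_at k (dy j (psi0 f N)) (Z0 md vac bf (vs[k := md u (int j) (vs ! k)])) es))
     = (\<Sum>k<length vs. \<Sum>j<M. (if 0 \<le> n then (of_int n gchoose j) *
         bf vac (Wf md vac (vs[k := md u (int j) (vs!k)]) (es'[k := es'!k - (n - int j)])) else 0))
       + (\<Sum>l\<le>2*N-2. B l)"
  proof -
    have "(\<Sum>k < length vs. fsum (\<lambda>j::nat.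
              mult_at k (dy j (psi0 f N)) (Z0 md vac bf (vs[k := md u (int j) (vs ! k)])) es))
      = (\<Sum>k<length vs. \<Sum>j<M. (if 0 \<le> n then (of_int n gchoose j) *
         bf vac (Wf md vac (vs[k := md u (int j) (vs!k)]) (es'[k := es'!k - (n - int j)])) else 0)
      + (\<Sum>l\<le>2*N-2. of_nat (l choose j) * f l p *
         bf vac (Wf md vac (vs[k := md u (int j) (vs!k)]) (es'[k := es'!k - (int l - int j)]))))"
      by (rule sum.cong) (simp_all add: step1)
    also have "\<dots> = (\<Sum>k<length vs. \<Sum>j<M. (if 0 \<le> n then (of_int n gchoose j) *
         bf vac (Wf md vac (vs[k := md u (int j) (vs!k)]) (es'[k := es'!k - (n - int j)])) else 0))
      + (\<Sum>k<length vs. \<Sum>j<M. \<Sum>l\<le>2*N-2. of_nat (l choose j) * f l p *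
         bf vac (Wf md vac (vs[k := md u (int j) (vs!k)]) (es'[k := es'!k - (int l - int j)])))"
      by (simp add: sum.distrib)
    also have "(\<Sum>k<length vs. \<Sum>j<M. \<Sum>l\<le>2*N-2. of_nat (l choose j) * f l p *
         bf vac (Wf md vac (vs[k := md u (int j) (vs!k)]) (es'[k := es'!k - (int l - int j)])))
       = (\<Sum>l\<le>2*N-2. B l)"
      unfolding B_def by (rule swap3)
    finally show ?thesis .
  qed
  also have "\<dots> = bf vac (md u n W)" using A Bz by simp
  also have "\<dots> = Z0 md vac bf (u # vs) es" by (simp add: es Z0_Wf W_def n_def)
  finally show "Z0 md vac bf (u # vs) es = (\<Sum>k < length vs. fsum (\<lambda>j::nat.
              mult_at k (dy j (psi0 f N)) (Z0 md vac bf (vs[k := md u (int j) (vs ! k)])) es))" by simp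
qed


end
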